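(* Let $n\ge1$ and let $\mathfrak{c}=\{c_{ij}\}_{1\le i<j\le n}$, $\mathfrak{\ell}=\{\ell_1,\dots,\ell_n\}$ be integers. For every $\sigma\in\{+,-\}^n$, the Cartier datum $m_\sigma\in\mathbb{Z}^n$ of the divisor $D(\mathfrak{c},\mathfrak{\ell})$ lies in the closure $\overline{C(\mathfrak{c},\mathfrak{\ell})}$ of $C(\mathfrak{c},\mathfrak{\ell})$ in the Euclidean topology of $\mathbb{R}^n$.
   Context: $A_n(x)=\ell_n$, $A_j(x)=\ell_j-\sum_{k=j+1}^nc_{jk}x_k$ for $1\le j\le n-1$. $C(\mathfrak{c},\mathfrak{\ell})=\{x\in\mathbb{R}^n:$ for each $1\le k\le n$, $A_k(x)<x_k<0$ or $0\le x_k\le A_k(x)\}$. Toric data: $e_j^+$ standard basis of $\mathbb{R}^n$, $e_j^-:=-e_j^+-\sum_{k>j}c_{jk}e_k^+$; $\Sigma_{\mathfrak{c}}$ the fan of cones generated by subsets of $\{e_1^\pm,\dots,e_n^\pm\}$ not containing any $\{e_j^+,e_j^-\}$, with maximal cones $\mathrm{Cone}\{e_1^{\sigma_1},\dots,e_n^{\sigma_n}\}$ indexed by $\sigma\in\{+,-\}^n$; $D(\mathfrak{c},\mathfrak{\ell})=\sum_j\ell_jD_{e_j^-}$ on the toric variety $X(\mathfrak{c})$. The Cartier datum $m_\sigma\in\mathbb{Z}^n$ is the unique vector with $\langle m_\sigma,e_j^{+}\rangle=0$ if $\sigma_j=+$ and $\langle m_\sigma,e_j^-\rangle=-\ell_j$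 if $\sigma_j=-$ (standard inner product); explicitly $m_{\sigma,j}=0$ if $\sigma_j=+$ and $m_{\sigma,j}=A_j(m_{\sigma,j+1},\dots,m_{\sigma,n})$ if $\sigma_j=-$. *)

theory Defs
  imports "HOL-Analysis.Analysis"
begin

text \<open>R^n is modelled as (real, 'n) vec for a finite linearly ordered index type 'n
  (the order plays the role of 1 < 2 < ... < n).  The coefficients c_jk are only
  used for j < k.  A sign vector sigma in {+,-}^n is a function 'n => bool
  (True = +, False = -).\<close>

definition A_fun :: "('n::{finite,linorder} \<Rightarrow> 'n \<Rightarrow> int) \<Rightarrow> ('n \<Rightarrow> int) \<Rightarrow> 'n \<Rightarrow> (real, 'n) vec \<Rightarrow> real" where
  "A_fun c l j x = of_int (l j) - (\<Sum>k\<in>{k. j < k}. of_int (c j k) * x $ k)"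

definition C_set :: "('n::{finite,linorder} \<Rightarrow> 'n \<Rightarrow> int) \<Rightarrow> ('n \<Rightarrow> int) \<Rightarrow> ((real, 'n) vec) set" where
  "C_set c l = {x. \<forall>k. (A_fun c l k x < x $ k \<and> x $ k < 0) \<or> (0 \<le> x $ k \<and> x $ k \<le> A_fun c l k x)}"

definition e_plus :: "'n::{finite,linorder} \<Rightarrow> (real, 'n) vec" where
  "e_plus j = (\<chi> k. if k = j then 1 else 0)"

definition e_minus :: "('n::{finite,linorder} \<Rightarrow> 'n \<Rightarrow> int) \<Rightarrow> 'n \<Rightarrow> (real, 'n) vec" where
  "e_minus c j = - e_plus j - (\<Sum>k\<in>{k. j < k}. of_int (c j k) *\<^sub>R e_plus k)"

definition int_vec :: "('n::{finite,linorder} \<Rightarrow> int) \<Rightarrow> (real, 'n) vec" where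
  "int_vec m = (\<chi> k. of_int (m k))"

definition cartier_datum :: "('n::{finite,linorder} \<Rightarrow> 'n \<Rightarrow> int) \<Rightarrow> ('n \<Rightarrow> int) \<Rightarrow> ('n \<Rightarrow> bool) \<Rightarrow> ('n \<Rightarrow> int)" where
  "cartier_datum c l \<sigma> = (THE m. \<forall>j. (\<sigma> j \<longrightarrow> int_vec m \<bullet> e_plus j = 0)
        \<and> (\<not> \<sigma> j \<longrightarrow> int_vec m \<bullet> e_minus c j = - of_int (l j)))"

end

theory Submission
  imports Defs
begin

definition good :: "('n::{finite,linorder} \<Rightarrow> 'n \<Rightarrow> int) \<Rightarrow> ('n \<Rightarrow> int) \<Rightarrow> 'n \<Rightarrow> (real, 'n) vec \<Rightarrow> bool" where
  "good c l k y \<longleftrightarrow> (A_fun c l k y < y $ k \<and> y $ k < 0) \<or> (0 \<le> y $ k \<and> y $ k \<le> A_fun c l k y)"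

definition cond :: "('n::{finite,linorder} \<Rightarrow> 'n \<Rightarrow> int) \<Rightarrow> ('n \<Rightarrow> int) \<Rightarrow> ('n \<Rightarrow> bool) \<Rightarrow> 'n \<Rightarrow> ('n \<Rightarrow> int) \<Rightarrow> bool" where
  "cond c l \<sigma> j m \<longleftrightarrow> (\<sigma> j \<longrightarrow> m j = 0) \<and> (\<not> \<sigma> j \<longrightarrow> of_int (m j) = A_fun c l j (int_vec m))"

lemma A_local:
  assumes "\<forall>i>k. y $ i = z $ i"
  shows "A_fun c l k y = A_fun c l k z"
  unfolding A_fun_def using assms by (intro arg_cong2[where f="(-)"] refl sum.cong) auto

lemma A_close:
  assumes "\<forall>i>k. \<bar>y $ i - z $ i\<bar> \<le> d"
  shows "\<bar>A_fun c l k y - A_fun c l k z\<bar> \<le> (\<Sum>i\<in>{i. k < i}. \<bar>of_int (c k i)\<bar>) * d"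
proof -
  have "A_fun c l k y - A_fun c l k z = (\<Sum>i\<in>{i. k < i}. of_int (c k i) * (z $ i - y $ i))"
    unfolding A_fun_def by (simp add: sum_subtractf[symmetric] algebra_simps)
  also have "\<bar>\<dots>\<bar> \<le> (\<Sum>i\<in>{i. k < i}. \<bar>of_int (c k i) * (z $ i - y $ i)\<bar>)"
    by (rule sum_abs)
  also have "\<dots> \<le> (\<Sum>i\<in>{i. k < i}. \<bar>of_int (c k i)\<bar> * d)"
  proof (rule sum_mono)
    fix i assume "i \<in> {i. k < i}"
    then have "\<bar>z $ i - y $ i\<bar> \<le> d" using assms by (simp add: abs_minus_commute)
    then show "\<bar>of_int (c k i) * (z $ i - y $ i)\<bar> \<le> \<bar>of_int (c k i)\<bar> * d"
      by (simp add: abs_mult mult_left_mono)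
  qed
  finally show ?thesis by (simp add: sum_distrib_right)
qed

lemma upclosed_step:
  fixes U :: "'n::{finite,linorder} set"
  assumes up: "\<forall>i j. i \<in> U \<longrightarrow> i \<le> j \<longrightarrow> j \<in> U" and cU: "card U = Suc n"
  defines "k0 \<equiv> Min U"
  shows "k0 \<in> U" "\<forall>i j. i \<in> U - {k0} \<longrightarrow> i \<le> j \<longrightarrow> j \<in> U - {k0}"
    "card (U - {k0}) = n" "\<forall>i>k0. i \<in> U - {k0}" "\<forall>j\<in>U - {k0}. k0 < j"
proof -
  have ne: "U \<noteq> {}" using cU by auto
  show k: "k0 \<in> U" unfolding k0_def using Min_in[OF finite ne] .
  have mn: "\<forall>j\<in>U. k0 \<le> j" unfolding k0_def by simp
  show "\<forall>j\<in>U - {k0}. k0 < j" using mn by (metis DiffE insertI1 order_le_less)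
  show "\<forall>i j. i \<in> U - {k0} \<longrightarrow> i \<le> j \<longrightarrow> j \<in> U - {k0}"
  proof (intro allI impI)
    fix i j assume a: "i \<in> U - {k0}" "i \<le> j"
    then have "j \<in> U" using up[rule_format, of i j] by simp
    moreover have "k0 < i" using a mn by (metis DiffE insertI1 order_le_less)
    ultimately show "j \<in> U - {k0}" using a by auto
  qed
  show "card (U - {k0}) = n" using cU k by (simp add: card_Diff_singleton)
  show "\<forall>i>k0. i \<in> U - {k0}"
  proof (intro allI impI)
    fix i assume h: "k0 < i"
    have "i \<in> U" using up[rule_format, OF k less_imp_le[OF h]] .
    then show "i \<in> U - {k0}" using h by simp
  qed
qed

lemma exists_gen:
  fixes c :: "'n::{finite,linorder} \<Rightarrow> 'n \<Rightarrow> int"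
  shows "\<forall>U. (\<forall>i j. i \<in> U \<longrightarrow> i \<le> j \<longrightarrow> j \<in> U) \<longrightarrow> card U = n \<longrightarrow>
     (\<exists>m. \<forall>j\<in>U. cond c l \<sigma> j m)"
proof (induction n)
  case 0
  then show ?case by auto
next
  case (Suc n)
  show ?case
  proof (intro allI impI)
    fix U :: "'n set"
    assume up: "\<forall>i j. i \<in> U \<longrightarrow> i \<le> j \<longrightarrow> j \<in> U" and cU: "card U = Suc n"
    define k0 where "k0 = Min U"
    note st = upclosed_step[OF up cU, folded k0_def]
    obtain m' where m': "\<forall>j\<in>U - {k0}. cond c l \<sigma> j m'" using Suc.IH st(2,3) by blast
    define v where "v = (if \<sigma> k0 then 0 else l k0 - (\<Sum>k\<in>{k. k0 < k}. c k0 k * m' k))"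
    define m where "m = m'(k0 := v)"
    have loc: "A_fun c l j (int_vec m) = A_fun c l j (int_vec m')" if "k0 \<le> j" for j
      by (rule A_local) (use that in \<open>auto simp: m_def int_vec_def\<close>)
    have "cond c l \<sigma> j m" if "j \<in> U" for j
    proof (cases "j = k0")
      case True
      have "A_fun c l k0 (int_vec m') = of_int (l k0 - (\<Sum>k\<in>{k. k0 < k}. c k0 k * m' k))"
        by (simp add: A_fun_def int_vec_def)
      then show ?thesis using True loc[of k0] by (cases "\<sigma> k0") (simp_all add: cond_def m_def v_def)
    next
      case False
      then have "j \<in> U - {k0}" using that by auto
      then have "k0 \<le> j" using st(5) by (meson less_imp_le)
      note this \<open>j \<in> U - {k0}\<close>
      then show ?thesis using m' loc[of j] False by (simp add: cond_def m_def)
    qed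
    then show "\<exists>m. \<forall>j\<in>U. cond c l \<sigma> j m" by blast
  qed
qed

lemma approx_gen:
  fixes c :: "'n::{finite,linorder} \<Rightarrow> 'n \<Rightarrow> int"
  assumes mc: "\<forall>j. cond c l \<sigma> j m"
  shows "\<forall>U. (\<forall>i j. i \<in> U \<longrightarrow> i \<le> j \<longrightarrow> j \<in> U) \<longrightarrow> card U = n \<longrightarrow>
     (\<forall>e>0. \<exists>y. \<forall>j\<in>U. good c l j y \<and> \<bar>y $ j - of_int (m j)\<bar> < e)"
proof (induction n)
  case 0
  then show ?case by auto
next
  case (Suc n)
  show ?case
  proof (intro allI impI)
    fix U :: "'n set" and e :: real
    assume up: "\<forall>i j. i \<in> U \<longrightarrow> i \<le> j \<longrightarrow> j \<in> U" and cU: "card U = Suc n" and e: "e > 0"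
    define k0 where "k0 = Min U"
    note st = upclosed_step[OF up cU, folded k0_def]
    define K where "K = (\<Sum>i\<in>{i. k0 < i}. \<bar>of_int (c k0 i)\<bar>::real)"
    have K0: "K \<ge> 0" unfolding K_def by (rule sum_nonneg) auto
    define e' where "e' = e / (2 * (K + 1))"
    have e'p: "e' > 0" using e K0 by (simp add: e'_def)
    have e'e: "e' \<le> e" using e K0 by (simp add: e'_def field_simps)
    obtain y where y: "\<forall>j\<in>U - {k0}. good c l j y \<and> \<bar>y $ j - of_int (m j)\<bar> < e'"
      using Suc.IH st(2,3) e'p by blast
    define a where "a = A_fun c l k0 y"
    define a0 where "a0 = A_fun c l k0 (int_vec m)"
    have "\<bar>a - a0\<bar> \<le> K * e'" unfolding a_def a0_def K_def
      by (rule A_close) (use y st(4) in \<open>force simp: int_vec_def\<close>)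
    also have "K * e' < e / 2" using e K0 by (simp add: e'_def field_simps)
    finally have close: "\<bar>a - a0\<bar> < e / 2" .
    define v where "v = (if \<sigma> k0 then (if a \<ge> 0 then 0 else max (a/2) (-e/2))
        else (if a \<ge> 0 then a else a + min (e/2) (-a/2)))"
    have tgt: "of_int (m k0) = (if \<sigma> k0 then 0 else a0)"
      using mc[rule_format, of k0] by (simp add: cond_def a0_def)
    define z where "z = (\<chi> i. if i = k0 then v else y $ i)"
    have loc: "A_fun c l j z = A_fun c l j y" if "k0 \<le> j" for j
      by (rule A_local) (use that in \<open>auto simp: z_def\<close>)
    have "good c l j z \<and> \<bar>z $ j - of_int (m j)\<bar> < e" if "j \<in> U" for j
    proof (cases "j = k0")
      case True
      have g: "good c l k0 z \<longleftrightarrow> (a < v \<and> v < 0) \<or> (0 \<le> v \<and> v \<le> a)"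
        using loc[of k0] by (simp add: good_def z_def a_def)
      have "((a < v \<and> v < 0) \<or> (0 \<le> v \<and> v \<le> a)) \<and> \<bar>v - of_int (m k0)\<bar> < e"
        using close e unfolding abs_less_iff unfolding tgt v_def by (auto simp: max_def min_def split: abs_split)
      then show ?thesis using True g by (simp add: z_def)
    next
      case False
      then have "j \<in> U - {k0}" using that by auto
      then have "k0 \<le> j" using st(5) by (meson less_imp_le)
      note this \<open>j \<in> U - {k0}\<close>
      then show ?thesis using y[rule_format, of j] loc[of j] False e'e by (auto simp: good_def z_def)
    qed
    then show "\<exists>y. \<forall>j\<in>U. good c l j y \<and> \<bar>y $ j - of_int (m j)\<bar> < e" by blast
  qed
qed

lemma ip_plus: "int_vec m \<bullet> e_plus j = of_int (m j)"
  by (simp add: inner_vec_def int_vec_def e_plus_def if_distrib cong: if_cong)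

lemma ip_minus: "int_vec m \<bullet> e_minus c j = - of_int (m j) - (\<Sum>k\<in>{k. j < k}. of_int (c j k) * of_int (m k))"
  by (simp add: e_minus_def inner_diff_right inner_sum_right ip_plus)

lemma A_int: "A_fun c l j (int_vec m) = of_int (l j) - (\<Sum>k\<in>{k. j < k}. of_int (c j k) * of_int (m k))"
  by (simp add: A_fun_def int_vec_def)

lemma cond_iff: "((\<sigma> j \<longrightarrow> int_vec m \<bullet> e_plus j = 0)
        \<and> (\<not> \<sigma> j \<longrightarrow> int_vec m \<bullet> e_minus c j = - of_int (l j))) \<longleftrightarrow> cond c l \<sigma> j m"
  unfolding cond_def ip_plus ip_minus A_int by auto

lemma cond_unique:
  fixes c :: "'n::{finite,linorder} \<Rightarrow> 'n \<Rightarrow> int"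
  assumes "\<forall>j. cond c l \<sigma> j m1" "\<forall>j. cond c l \<sigma> j m2"
  shows "m1 = m2"
proof (rule ccontr)
  assume "m1 \<noteq> m2"
  define S where "S = {k. m1 k \<noteq> m2 k}"
  have ne: "S \<noteq> {}" using \<open>m1 \<noteq> m2\<close> by (auto simp: S_def)
  define k where "k = Max S"
  have kS: "k \<in> S" using ne by (simp add: k_def)
  have eq: "\<forall>i>k. m1 i = m2 i"
    using ne by (auto simp: k_def S_def)
  have "A_fun c l k (int_vec m1) = A_fun c l k (int_vec m2)"
    by (rule A_local) (use eq in \<open>simp add: int_vec_def\<close>)
  then have "m1 k = m2 k" using assms[THEN spec, of k] by (auto simp: cond_def)
  then show False using kS by (simp add: S_def)
qed

theorem lemma2p3:
  fixes c :: "'n::{finite,linorder} \<Rightarrow> 'n \<Rightarrow> int"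
    and l :: "'n \<Rightarrow> int"
    and \<sigma> :: "'n \<Rightarrow> bool"
  shows "int_vec (cartier_datum c l \<sigma>) \<in> closure (C_set c l)"
proof -
  obtain m where m: "\<forall>j. cond c l \<sigma> j m"
    using exists_gen[of "CARD('n)" c l \<sigma>, rule_format, of UNIV] by auto
  have cd: "cartier_datum c l \<sigma> = m"
    unfolding cartier_datum_def cond_iff
    by (rule the_equality) (use m cond_unique in blast)+
  show ?thesis unfolding cd
  proof (rule iffD2[OF closure_approachable], intro allI impI)
    fix e :: real assume e: "e > 0"
    define e' where "e' = e / (real CARD('n) + 1)"
    have e'p: "e' > 0" using e by (simp add: e'_def)
    obtain y where y: "\<forall>j. good c l j y \<and> \<bar>y $ j - of_int (m j)\<bar> < e'"
      using approx_gen[OF m, of "CARD('n)", rule_format, of UNIV e'] e'p by auto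
    have "y \<in> C_set c l" using y by (simp add: C_set_def good_def)
    moreover have "dist y (int_vec m) < e"
    proof -
      have "dist y (int_vec m) = norm (y - int_vec m)" by (simp add: dist_norm)
      also have "\<dots> \<le> (\<Sum>i\<in>UNIV. \<bar>(y - int_vec m) $ i\<bar>)" by (rule norm_le_l1_cart)
      also have "\<dots> \<le> (\<Sum>i\<in>(UNIV::'n set). e')"
        using y by (intro sum_mono) (auto simp: int_vec_def less_imp_le)
      also have "\<dots> = real CARD('n) * e'" by simp
      also have "\<dots> < e" using e by (simp add: e'_def field_simps)
      finally show ?thesis .
    qed
    ultimately show "\<exists>y\<in>C_set c l. dist y (int_vec m) < e" by blast
  qed
qed

end
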